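(* Let each $f_{i,j}$ be $L_f$-smooth with $\gamma>2\lambda>4L_f$, so that $\tilde f_{i,j}$ (hence $F_i$) is $L_{\tilde f}$-smooth with $L_{\tilde f}=\lambda$, and $\gamma>L_{\tilde f}$. Fix a team $i$ and $x^t\in\mathbb{R}^d$; let $w_i^{t,0}=x^t$ and $w_i^{t,k+1}=(1-\eta_i(\lambda+\gamma))w_i^{t,k}+\eta_i\gamma x^t+\eta_i\lambda\frac1{N_i}\sum_{j=1}^{N_i}\theta_{i,j}^{t,k,L}$ for $k=0,\dots,K-1$, where $\|\mathrm{prox}_{f_{i,j}/\lambda}(w_i^{t,k})-\theta_{i,j}^{t,k,L}\|^2\le\delta_{i,j}$ for all $k,j$. Let $p_i(y)=F_i(y)+\frac\gamma2\|y-x^t\|^2$ and let $w_i^{t,k^*}$ be an iterate $w_i^{t,k}$, $k\in\{0,\dots,K-1\}$, minimizing $\|\nabla p_i(w_i^{t,k})\|^2$. If $\eta_i\le\frac1{L_{\tilde f}+\gamma}$, then $$\|w_i^{t,k^*}-\mathrm{prox}_{F_i/\gamma}(x^t)\|^2\le\frac{1}{(\gamma-L_{\tilde f})^2}\Big(\frac{2}{K\eta_i}\big(F_i(x^t)-\tilde F_i(x^t)\big)+\lambda^2\frac1{N_i}\sum_{j=1}^{N_i}\delta_{i,j}\Big).$$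
   Context: Given $\lambda,\gamma>0$ and differentiable $f_{i,j}$: $\tilde f_{i,j}(w)=\min_\theta\{f_{i,j}(\theta)+\frac\lambda2\|\theta-w\|^2\}$ with minimizer $\mathrm{prox}_{f_{i,j}/\lambda}(w)$; $F_i(w)=\frac1{N_i}\sum_j\tilde f_{i,j}(w)$; $\tilde F_i(x)=\min_w\{F_i(w)+\frac\gamma2\|w-x\|^2\}$ with minimizer $\mathrm{prox}_{F_i/\gamma}(x)$. (The paper writes the first term as $F_i(x^t)-\mathrm{prox}_{F_i/\gamma}(x^t)$; the quantity meant is $p_i(x^t)-p_i(\mathrm{prox}_{F_i/\gamma}(x^t))=F_i(x^t)-\tilde F_i(x^t)$.) *)

theory Defs
  imports "HOL-Analysis.Analysis"
begin

definition grad :: "('a::euclidean_space \<Rightarrow> real) \<Rightarrow> 'a \<Rightarrow> 'a" where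
  "grad f x = (SOME g. GDERIV f x :> g)"

definition smooth :: "real \<Rightarrow> ('a::euclidean_space \<Rightarrow> real) \<Rightarrow> bool" where
  "smooth L f \<longleftrightarrow> (\<forall>x. f differentiable (at x)) \<and>
     (\<forall>x y. norm (grad f x - grad f y) \<le> L * norm (x - y))"

definition moreau :: "('a::euclidean_space \<Rightarrow> real) \<Rightarrow> real \<Rightarrow> 'a \<Rightarrow> real" where
  "moreau f lam w = Inf (range (\<lambda>\<theta>. f \<theta> + lam / 2 * (norm (\<theta> - w))\<^sup>2))"

definition prox :: "('a::euclidean_space \<Rightarrow> real) \<Rightarrow> real \<Rightarrow> 'a \<Rightarrow> 'a" where
  "prox f lam w = (SOME \<theta>. \<forall>\<theta>'. f \<theta> + lam / 2 * (norm (\<theta> - w))\<^sup>2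
                                  \<le> f \<theta>' + lam / 2 * (norm (\<theta>' - w))\<^sup>2)"

end

theory Submission
  imports Defs
begin

lemma grad_works:
  fixes f :: "'a::euclidean_space \<Rightarrow> real"
  assumes "f differentiable (at x)"
  shows "GDERIV f x :> grad f x"
proof -
  obtain D where D: "(f has_derivative D) (at x)" using assms unfolding differentiable_def by blast
  have lin: "linear D" using D has_derivative_linear by blast
  define g where "g = (\<Sum>b\<in>Basis. D b *\<^sub>R b)"
  have "D h = inner h g" for h
  proof -
    have "D h = D (\<Sum>b\<in>Basis. inner h b *\<^sub>R b)" by (simp add: euclidean_representation)
    also have "\<dots> = (\<Sum>b\<in>Basis. inner h b * D b)"
      by (simp add: linear_sum[OF lin] linear_scale[OF lin])
    also have "\<dots> = inner h g" unfolding g_def by (simp add: inner_sum_right mult.commute)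
    finally show ?thesis .
  qed
  then have "D = (\<lambda>h. inner h g)" by auto
  then have "GDERIV f x :> g" using D by (simp add: gderiv_def)
  then show ?thesis unfolding grad_def by (rule someI)
qed

lemma grad_unique:
  fixes f :: "'a::euclidean_space \<Rightarrow> real"
  assumes "GDERIV f x :> g"
  shows "grad f x = g"
proof -
  have *: "GDERIV f x :> grad f x" unfolding grad_def using assms by (rule someI)
  have "(\<lambda>h. inner h (grad f x)) = (\<lambda>h. inner h g)"
    using has_derivative_unique * assms unfolding gderiv_def by blast
  then have "inner (grad f x - g) (grad f x) = inner (grad f x - g) g" by metis
  then have "inner (grad f x - g) (grad f x - g) = 0" by (simp add: inner_diff_right)
  then show ?thesis by simp
qed

lemma quad_gderiv:
  fixes g :: "'a::euclidean_space \<Rightarrow> real"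
  assumes "\<And>y. \<bar>g y - g w - inner a (y - w)\<bar> \<le> C * (norm (y - w))\<^sup>2"
  shows "GDERIV g w :> a"
  unfolding gderiv_def has_derivative_at_alt
proof (intro conjI allI impI)
  show "bounded_linear (\<lambda>h. inner h a)" by (rule bounded_linear_inner_left)
  fix e :: real assume e: "e > 0"
  define C' where "C' = \<bar>C\<bar> + 1"
  have C': "C' > 0" "C \<le> C'" unfolding C'_def by auto
  show "\<exists>d>0. \<forall>y. norm (y - w) < d \<longrightarrow> norm (g y - g w - inner (y - w) a) \<le> e * norm (y - w)"
  proof (intro exI[of _ "e / C'"] conjI allI impI)
    show "e / C' > 0" using e C' by simp
    fix y assume y: "norm (y - w) < e / C'"
    have "norm (g y - g w - inner (y - w) a) \<le> C * (norm (y - w))\<^sup>2"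
      using assms[of y] by (simp add: inner_commute)
    also have "\<dots> \<le> C' * (norm (y - w) * norm (y - w))"
      using C' by (simp add: power2_eq_square mult_right_mono)
    also have "\<dots> \<le> C' * ((e / C') * norm (y - w))"
      using C' y by (intro mult_left_mono mult_right_mono) auto
    also have "\<dots> = e * norm (y - w)" using C' by simp
    finally show "norm (g y - g w - inner (y - w) a) \<le> e * norm (y - w)" .
  qed
qed


lemma norm_add_sq:
  fixes a b :: "'a::real_inner"
  shows "(norm (a + b))\<^sup>2 = (norm a)\<^sup>2 + 2 * inner a b + (norm b)\<^sup>2"
  by (simp add: power2_norm_eq_inner inner_add_left inner_add_right inner_commute)

lemma norm_diff_sq:
  fixes a b :: "'a::real_inner"
  shows "(norm (a - b))\<^sup>2 = (norm a)\<^sup>2 - 2 * inner a b + (norm b)\<^sup>2"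
  by (simp add: power2_norm_eq_inner inner_diff_left inner_diff_right inner_commute)

lemma smooth_lower:
  fixes f :: "'a::euclidean_space \<Rightarrow> real"
  assumes sm: "smooth L f"
  shows "f y \<ge> f x + inner (grad f x) (y - x) - L / 2 * (norm (y - x))\<^sup>2"
proof -
  define v where "v = y - x"
  have diff: "\<And>z. f differentiable (at z)" and lip: "\<And>a b. norm (grad f a - grad f b) \<le> L * norm (a - b)"
    using sm unfolding smooth_def by auto
  define \<psi> where "\<psi> t = f (x + t *\<^sub>R v) - t * inner (grad f x) v + L / 2 * t\<^sup>2 * (norm v)\<^sup>2" for t
  have der: "(\<psi> has_real_derivative (inner (grad f (x + t *\<^sub>R v)) v - inner (grad f x) v + L * t * (norm v)\<^sup>2)) (at t)" for t
  proof -
    have g: "(f has_derivative (\<lambda>h. inner h (grad f (x + t *\<^sub>R v)))) (at (x + t *\<^sub>R v))"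
      using grad_works[OF diff] unfolding gderiv_def by blast
    have l: "((\<lambda>s. x + s *\<^sub>R v) has_derivative (\<lambda>s. s *\<^sub>R v)) (at t)"
      by (auto intro!: derivative_eq_intros)
    have "((\<lambda>s. f (x + s *\<^sub>R v)) has_derivative (\<lambda>s. inner (s *\<^sub>R v) (grad f (x + t *\<^sub>R v)))) (at t)"
      using has_derivative_compose[OF l g] by (simp add: o_def)
    then have c: "((\<lambda>s. f (x + s *\<^sub>R v)) has_real_derivative (inner (grad f (x + t *\<^sub>R v)) v)) (at t)"
      unfolding has_field_derivative_def by (rule has_derivative_eq_rhs) (simp add: fun_eq_iff inner_commute mult.commute)
    have q: "((\<lambda>s. L / 2 * s\<^sup>2 * (norm v)\<^sup>2) has_real_derivative (L * t * (norm v)\<^sup>2)) (at t)"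
      by (auto intro!: derivative_eq_intros simp: power2_eq_square)
    have r: "((\<lambda>s. s * inner (grad f x) v) has_real_derivative (inner (grad f x) v)) (at t)"
      by (auto intro!: derivative_eq_intros)
    show ?thesis unfolding \<psi>_def using DERIV_add[OF DERIV_diff[OF c r] q] by simp
  qed
  have mono: "\<psi> 0 \<le> \<psi> 1"
  proof (rule DERIV_nonneg_imp_nondecreasing[of 0 1])
    fix t :: real assume t: "0 \<le> t" "t \<le> 1"
    have "\<bar>inner (grad f (x + t *\<^sub>R v) - grad f x) v\<bar> \<le> norm (grad f (x + t *\<^sub>R v) - grad f x) * norm v"
      by (rule Cauchy_Schwarz_ineq2)
    also have "\<dots> \<le> (L * norm (t *\<^sub>R v)) * norm v"
      using lip[of "x + t *\<^sub>R v" x] by (intro mult_right_mono) auto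
    also have "\<dots> = L * t * (norm v)\<^sup>2" using t by (simp add: power2_eq_square)
    finally have "inner (grad f (x + t *\<^sub>R v)) v - inner (grad f x) v + L * t * (norm v)\<^sup>2 \<ge> 0"
      by (simp add: inner_diff_left)
    then show "\<exists>y. DERIV \<psi> t :> y \<and> 0 \<le> y" using der by blast
  qed simp
  then show ?thesis unfolding \<psi>_def v_def by simp
qed

lemma prox_char:
  fixes f :: "'a::euclidean_space \<Rightarrow> real"
  assumes sm: "smooth L f" and L0: "0 \<le> L" and Llam: "L < lam"
  shows "grad f (prox f lam w) = lam *\<^sub>R (w - prox f lam w)"
    and "\<And>\<theta>. f (prox f lam w) + lam / 2 * (norm (prox f lam w - w))\<^sup>2 \<le> f \<theta> + lam / 2 * (norm (\<theta> - w))\<^sup>2"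
    and "moreau f lam w = f (prox f lam w) + lam / 2 * (norm (prox f lam w - w))\<^sup>2"
proof -
  have lip: "\<And>a b. norm (grad f a - grad f b) \<le> L * norm (a - b)"
    using sm unfolding smooth_def by auto
  have lam0: "lam > 0" using L0 Llam by linarith
  define T where "T \<theta> = w - (1 / lam) *\<^sub>R grad f \<theta>" for \<theta>
  have "\<exists>!\<theta>. T \<theta> = \<theta>"
  proof (rule banach_fix_type[of "L / lam"])
    show "0 \<le> L / lam" "L / lam < 1" using L0 Llam lam0 by auto
    show "\<forall>a b. dist (T a) (T b) \<le> L / lam * dist a b"
    proof (intro allI)
      fix a b
      have "dist (T a) (T b) = norm ((1 / lam) *\<^sub>R (grad f b - grad f a))"
        unfolding T_def dist_norm by (simp add: algebra_simps)
      also have "\<dots> = (1 / lam) * norm (grad f b - grad f a)" using lam0 by simp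
      also have "\<dots> \<le> (1 / lam) * (L * norm (b - a))" using lip[of b a] lam0 by (intro mult_left_mono) auto
      also have "\<dots> = L / lam * dist a b" by (simp add: dist_norm norm_minus_commute)
      finally show "dist (T a) (T b) \<le> L / lam * dist a b" .
    qed
  qed
  then obtain t0 where t0: "T t0 = t0" by blast
  have g0: "grad f t0 = lam *\<^sub>R (w - t0)"
  proof -
    have "t0 = w - (1 / lam) *\<^sub>R grad f t0" using t0 unfolding T_def by simp
    then have "lam *\<^sub>R (w - t0) = lam *\<^sub>R ((1 / lam) *\<^sub>R grad f t0)" by (metis add_diff_cancel_left' diff_add_cancel)
    then show ?thesis using lam0 by simp
  qed
  have strict: "f \<theta> + lam / 2 * (norm (\<theta> - w))\<^sup>2 \<ge> f t0 + lam / 2 * (norm (t0 - w))\<^sup>2 + (lam - L) / 2 * (norm (\<theta> - t0))\<^sup>2" for \<theta>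
  proof -
    have a: "f \<theta> \<ge> f t0 + inner (grad f t0) (\<theta> - t0) - L / 2 * (norm (\<theta> - t0))\<^sup>2"
      by (rule smooth_lower[OF sm])
    have b: "inner (grad f t0) (\<theta> - t0) = - lam * inner (\<theta> - t0) (t0 - w)"
      unfolding g0 by (simp add: inner_commute inner_diff_left inner_diff_right algebra_simps)
    have "\<theta> - w = (\<theta> - t0) + (t0 - w)" by simp
    then have c0: "(norm (\<theta> - w))\<^sup>2 = (norm (\<theta> - t0))\<^sup>2 + 2 * inner (\<theta> - t0) (t0 - w) + (norm (t0 - w))\<^sup>2"
      using norm_add_sq[of "\<theta> - t0" "t0 - w"] by simp
    have c: "lam / 2 * (norm (\<theta> - w))\<^sup>2 = lam / 2 * (norm (\<theta> - t0))\<^sup>2 + lam * inner (\<theta> - t0) (t0 - w) + lam / 2 * (norm (t0 - w))\<^sup>2"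
      unfolding c0 by (simp add: algebra_simps)
    have d: "(lam - L) / 2 * (norm (\<theta> - t0))\<^sup>2 = lam / 2 * (norm (\<theta> - t0))\<^sup>2 - L / 2 * (norm (\<theta> - t0))\<^sup>2"
      by (simp add: diff_divide_distrib left_diff_distrib)
    show ?thesis using a b c d by linarith
  qed
  have min0: "\<forall>\<theta>'. f t0 + lam / 2 * (norm (t0 - w))\<^sup>2 \<le> f \<theta>' + lam / 2 * (norm (\<theta>' - w))\<^sup>2"
  proof
    fix \<theta>' show "f t0 + lam / 2 * (norm (t0 - w))\<^sup>2 \<le> f \<theta>' + lam / 2 * (norm (\<theta>' - w))\<^sup>2"
      using strict[of \<theta>'] Llam by (smt (verit) divide_nonneg_nonneg zero_le_power2 mult_nonneg_nonneg)
  qed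
  have P: "prox f lam w = t0"
    unfolding prox_def
  proof (rule some_equality)
    show "\<forall>\<theta>'. f t0 + lam / 2 * (norm (t0 - w))\<^sup>2 \<le> f \<theta>' + lam / 2 * (norm (\<theta>' - w))\<^sup>2" by (rule min0)
    fix t1 assume "\<forall>\<theta>'. f t1 + lam / 2 * (norm (t1 - w))\<^sup>2 \<le> f \<theta>' + lam / 2 * (norm (\<theta>' - w))\<^sup>2"
    then have "f t1 + lam / 2 * (norm (t1 - w))\<^sup>2 \<le> f t0 + lam / 2 * (norm (t0 - w))\<^sup>2" by blast
    with strict[of t1] have "(lam - L) / 2 * (norm (t1 - t0))\<^sup>2 \<le> 0" by linarith
    moreover have "(lam - L) / 2 > 0" using Llam by simp
    ultimately have "(norm (t1 - t0))\<^sup>2 \<le> 0" by (simp add: mult_le_0_iff)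
    then show "t1 = t0" by simp
  qed
  show "grad f (prox f lam w) = lam *\<^sub>R (w - prox f lam w)" using P g0 by simp
  show "\<And>\<theta>. f (prox f lam w) + lam / 2 * (norm (prox f lam w - w))\<^sup>2 \<le> f \<theta> + lam / 2 * (norm (\<theta> - w))\<^sup>2"
    using P min0 by simp
  show "moreau f lam w = f (prox f lam w) + lam / 2 * (norm (prox f lam w - w))\<^sup>2"
    unfolding moreau_def P by (rule cInf_eq_minimum) (use min0 in auto)
qed


lemma moreau_upper:
  fixes f :: "'a::euclidean_space \<Rightarrow> real"
  assumes sm: "smooth L f" and L0: "0 \<le> L" and Llam: "L < lam"
  shows "moreau f lam y \<le> moreau f lam w + lam * inner (w - prox f lam w) (y - w) + lam / 2 * (norm (y - w))\<^sup>2"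
proof -
  define a where "a = prox f lam w"
  have my: "moreau f lam y \<le> f a + lam / 2 * (norm (a - y))\<^sup>2"
    using prox_char(2,3)[OF sm L0 Llam, of y] by simp
  have mw: "moreau f lam w = f a + lam / 2 * (norm (a - w))\<^sup>2"
    using prox_char(3)[OF sm L0 Llam, of w] a_def by simp
  have "a - y = (a - w) - (y - w)" by simp
  then have e: "(norm (a - y))\<^sup>2 = (norm (a - w))\<^sup>2 - 2 * inner (a - w) (y - w) + (norm (y - w))\<^sup>2"
    using norm_diff_sq[of "a - w" "y - w"] by simp
  have i: "inner (w - a) (y - w) = - inner (a - w) (y - w)"
    by (metis inner_minus_left minus_diff_eq)
  show ?thesis unfolding a_def[symmetric] using my mw e i by (simp add: algebra_simps)
qed

lemma moreau_lower:
  fixes f :: "'a::euclidean_space \<Rightarrow> real"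
  assumes sm: "smooth L f" and L0: "0 \<le> L" and Llam: "2 * L < lam"
  shows "moreau f lam y \<ge> moreau f lam w + lam * inner (w - prox f lam w) (y - w) - L * (norm (y - w))\<^sup>2"
proof -
  have Llam': "L < lam" using L0 Llam by linarith
  define a where "a = prox f lam w"
  define b where "b = prox f lam y"
  define u where "u = a - w"
  define d where "d = y - w"
  define e where "e = (b - y) - u"
  have my: "moreau f lam y = f b + lam / 2 * (norm (b - y))\<^sup>2"
    using prox_char(3)[OF sm L0 Llam', of y] b_def by simp
  have mw: "moreau f lam w = f a + lam / 2 * (norm u)\<^sup>2"
    using prox_char(3)[OF sm L0 Llam', of w] a_def u_def by simp
  have ga: "grad f a = - lam *\<^sub>R u"
    using prox_char(1)[OF sm L0 Llam', of w] a_def u_def by (simp add: scaleR_diff_right)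
  have ba: "b - a = d + e" unfolding e_def u_def d_def by simp
  have by': "b - y = u + e" unfolding e_def by simp
  have fb: "f b \<ge> f a + inner (grad f a) (b - a) - L / 2 * (norm (b - a))\<^sup>2"
    by (rule smooth_lower[OF sm])
  have fb': "f b \<ge> f a - lam * inner u d - lam * inner u e - L / 2 * (norm (d + e))\<^sup>2"
    using fb unfolding ga ba by (simp add: inner_add_right)
  have n1: "(norm (b - y))\<^sup>2 = (norm u)\<^sup>2 + 2 * inner u e + (norm e)\<^sup>2"
    unfolding by' by (rule norm_add_sq)
  have n2: "(norm (d + e))\<^sup>2 \<le> 2 * (norm d)\<^sup>2 + 2 * (norm e)\<^sup>2"
  proof -
    have "0 \<le> (norm (d - e))\<^sup>2" by simp
    then show ?thesis using norm_add_sq[of d e] norm_diff_sq[of d e] by linarith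
  qed
  have n3: "L / 2 * (norm (d + e))\<^sup>2 \<le> L * (norm d)\<^sup>2 + L * (norm e)\<^sup>2"
    using mult_left_mono[OF n2, of "L / 2"] L0 by (simp add: algebra_simps)
  have n4: "L * (norm e)\<^sup>2 \<le> lam / 2 * (norm e)\<^sup>2"
    using Llam by (intro mult_right_mono) auto
  have i0: "inner (w - a) d = - inner u d"
    unfolding u_def by (metis inner_minus_left minus_diff_eq)
  have i: "lam * inner (w - a) d = - (lam * inner u d)" by (simp add: i0)
  have "lam / 2 * (norm (b - y))\<^sup>2 = lam / 2 * (norm u)\<^sup>2 + lam * inner u e + lam / 2 * (norm e)\<^sup>2"
    unfolding n1 by (simp add: algebra_simps)
  then show ?thesis unfolding a_def[symmetric] d_def[symmetric] my mw
    using fb' n3 n4 i by linarith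
qed

lemma prox_lip:
  fixes f :: "'a::euclidean_space \<Rightarrow> real"
  assumes sm: "smooth L f" and L0: "0 \<le> L" and Llam: "2 * L < lam"
  shows "norm (prox f lam y - prox f lam w) \<le> 2 * norm (y - w)"
proof -
  have Llam': "L < lam" and lam0: "lam > 0" using L0 Llam by linarith+
  define a where "a = prox f lam w"
  define b where "b = prox f lam y"
  have ga: "grad f a = lam *\<^sub>R (w - a)" using prox_char(1)[OF sm L0 Llam', of w] a_def by simp
  have gb: "grad f b = lam *\<^sub>R (y - b)" using prox_char(1)[OF sm L0 Llam', of y] b_def by simp
  have lip: "norm (grad f b - grad f a) \<le> L * norm (b - a)"
    using sm unfolding smooth_def by auto
  have "b - a = (y - w) - (1 / lam) *\<^sub>R (grad f b - grad f a)"
    unfolding ga gb using lam0 by (simp add: algebra_simps)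
  then have "norm (b - a) \<le> norm (y - w) + (1 / lam) * norm (grad f b - grad f a)"
    by (metis norm_triangle_ineq4 norm_scaleR abs_of_pos lam0 zero_less_divide_1_iff)
  also have "\<dots> \<le> norm (y - w) + (1 / lam) * (L * norm (b - a))"
    using lip lam0 by (intro add_left_mono mult_left_mono) auto
  also have "(1 / lam) * (L * norm (b - a)) \<le> (1 / 2) * norm (b - a)"
  proof -
    have "L / lam \<le> 1 / 2" using Llam lam0 by (simp add: divide_simps)
    then have "L / lam * norm (b - a) \<le> 1 / 2 * norm (b - a)" by (intro mult_right_mono) auto
    then show ?thesis by simp
  qed
  finally show ?thesis unfolding a_def[symmetric] b_def[symmetric] by linarith
qed


lemma avg_upper:
  fixes q :: "nat \<Rightarrow> 'a::real_inner"
  assumes N: "N > 0" and h: "\<And>j. j < N \<Longrightarrow> a j \<le> b j + c * inner (v - q j) d + e"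
  shows "(1 / real N) * (\<Sum>j<N. a j) \<le> (1 / real N) * (\<Sum>j<N. b j) + c * inner (v - (1 / real N) *\<^sub>R (\<Sum>j<N. q j)) d + e"
proof -
  have "(\<Sum>j<N. a j) \<le> (\<Sum>j<N. b j + c * inner (v - q j) d + e)" using h by (intro sum_mono) auto
  also have "\<dots> = (\<Sum>j<N. b j) + c * (real N * inner v d - inner (\<Sum>j<N. q j) d) + real N * e"
    by (simp add: sum.distrib sum_distrib_left[symmetric] inner_diff_left inner_sum_left sum_subtractf algebra_simps)
  finally have *: "(\<Sum>j<N. a j) \<le> (\<Sum>j<N. b j) + c * (real N * inner v d - inner (\<Sum>j<N. q j) d) + real N * e" .
  have "(1 / real N) * (\<Sum>j<N. a j) \<le> (1 / real N) * ((\<Sum>j<N. b j) + c * (real N * inner v d - inner (\<Sum>j<N. q j) d) + real N * e)"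
    using * by (intro mult_left_mono) auto
  also have "\<dots> = (1 / real N) * (\<Sum>j<N. b j) + c * inner (v - (1 / real N) *\<^sub>R (\<Sum>j<N. q j)) d + e"
    using N by (simp add: inner_diff_left field_simps)
  finally show ?thesis .
qed

lemma avg_lower:
  fixes q :: "nat \<Rightarrow> 'a::real_inner"
  assumes N: "N > 0" and h: "\<And>j. j < N \<Longrightarrow> b j + c * inner (v - q j) d + e \<le> a j"
  shows "(1 / real N) * (\<Sum>j<N. b j) + c * inner (v - (1 / real N) *\<^sub>R (\<Sum>j<N. q j)) d + e \<le> (1 / real N) * (\<Sum>j<N. a j)"
proof -
  have "(\<Sum>j<N. b j + c * inner (v - q j) d + e) \<le> (\<Sum>j<N. a j)" using h by (intro sum_mono) auto
  moreover have "(\<Sum>j<N. b j + c * inner (v - q j) d + e) = (\<Sum>j<N. b j) + c * (real N * inner v d - inner (\<Sum>j<N. q j) d) + real N * e"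
    by (simp add: sum.distrib sum_distrib_left[symmetric] inner_diff_left inner_sum_left sum_subtractf algebra_simps)
  ultimately have *: "(\<Sum>j<N. b j) + c * (real N * inner v d - inner (\<Sum>j<N. q j) d) + real N * e \<le> (\<Sum>j<N. a j)" by simp
  have "(1 / real N) * ((\<Sum>j<N. b j) + c * (real N * inner v d - inner (\<Sum>j<N. q j) d) + real N * e) \<le> (1 / real N) * (\<Sum>j<N. a j)"
    using * by (intro mult_left_mono) auto
  moreover have "(1 / real N) * ((\<Sum>j<N. b j) + c * (real N * inner v d - inner (\<Sum>j<N. q j) d) + real N * e) = (1 / real N) * (\<Sum>j<N. b j) + c * inner (v - (1 / real N) *\<^sub>R (\<Sum>j<N. q j)) d + e"
    using N by (simp add: inner_diff_left field_simps)
  ultimately show ?thesis by simp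
qed

lemma avg_norm:
  fixes q :: "nat \<Rightarrow> 'a::real_normed_vector"
  assumes N: "N > 0" and h: "\<And>j. j < N \<Longrightarrow> norm (q j) \<le> B"
  shows "norm ((1 / real N) *\<^sub>R (\<Sum>j<N. q j)) \<le> B"
proof -
  have "norm ((1 / real N) *\<^sub>R (\<Sum>j<N. q j)) = (1 / real N) * norm (\<Sum>j<N. q j)" by simp
  also have "\<dots> \<le> (1 / real N) * (\<Sum>j<N. norm (q j))" by (intro mult_left_mono norm_sum) auto
  also have "\<dots> \<le> (1 / real N) * (\<Sum>j<N. B)" using h by (intro mult_left_mono sum_mono) auto
  also have "\<dots> = B" using N by simp
  finally show ?thesis .
qed

lemma avg_norm_sq:
  fixes q :: "nat \<Rightarrow> 'a::real_normed_vector"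
  assumes N: "N > 0" and h: "\<And>j. j < N \<Longrightarrow> (norm (q j))\<^sup>2 \<le> \<delta> j"
  shows "(norm ((1 / real N) *\<^sub>R (\<Sum>j<N. q j)))\<^sup>2 \<le> (1 / real N) * (\<Sum>j<N. \<delta> j)"
proof -
  have "norm ((1 / real N) *\<^sub>R (\<Sum>j<N. q j)) \<le> (1 / real N) * (\<Sum>j<N. norm (q j))"
    by (simp add: norm_sum divide_right_mono)
  then have "(norm ((1 / real N) *\<^sub>R (\<Sum>j<N. q j)))\<^sup>2 \<le> ((1 / real N) * (\<Sum>j<N. norm (q j)))\<^sup>2"
    by (intro power_mono) auto
  also have "\<dots> = (\<Sum>j<N. norm (q j))\<^sup>2 / (real N)\<^sup>2" by (simp add: power_divide)
  also have "\<dots> \<le> ((\<Sum>j<N. (norm (q j))\<^sup>2) * real N) / (real N)\<^sup>2"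
    using sum_squared_le_sum_of_squares[of "\<lambda>j. norm (q j)" "{..<N}"] by (intro divide_right_mono) auto
  also have "\<dots> = (1 / real N) * (\<Sum>j<N. (norm (q j))\<^sup>2)" using N by (simp add: power2_eq_square)
  also have "\<dots> \<le> (1 / real N) * (\<Sum>j<N. \<delta> j)" using h by (intro mult_left_mono sum_mono) auto
  finally show ?thesis .
qed

theorem mainTheorem6:
  fixes f :: "nat \<Rightarrow> 'a::euclidean_space \<Rightarrow> real"
    and N K kstar :: nat
    and Lf lam gam eta :: real
    and x :: 'a
    and w :: "nat \<Rightarrow> 'a"
    and \<theta> :: "nat \<Rightarrow> nat \<Rightarrow> 'a"
    and \<delta> :: "nat \<Rightarrow> real"
    and F p :: "'a \<Rightarrow> real"
  assumes N_pos: "N > 0"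
    and smooth_f: "\<forall>j<N. smooth Lf (f j)"
    and lam_pos: "lam > 0"
    and gam_lam: "gam > 2 * lam"
    and lam_Lf: "2 * lam > 4 * Lf"
    and F_def: "F = (\<lambda>v. (1 / real N) * (\<Sum>j<N. moreau (f j) lam v))"
    and w0: "w 0 = x"
    and w_step: "\<forall>k<K. w (Suc k) = (1 - eta * (lam + gam)) *\<^sub>R w k + (eta * gam) *\<^sub>R x
                   + (eta * lam) *\<^sub>R ((1 / real N) *\<^sub>R (\<Sum>j<N. \<theta> k j))"
    and inexact: "\<forall>k<K. \<forall>j<N. (norm (prox (f j) lam (w k) - \<theta> k j))\<^sup>2 \<le> \<delta> j"
    and p_def: "p = (\<lambda>y. F y + gam / 2 * (norm (y - x))\<^sup>2)"
    and kstar_lt: "kstar < K"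
    and kstar_min: "\<forall>k<K. (norm (grad p (w kstar)))\<^sup>2 \<le> (norm (grad p (w k)))\<^sup>2"
    and eta_pos: "eta > 0"
    and eta_le: "eta \<le> 1 / (lam + gam)"
  shows "(norm (w kstar - prox F gam x))\<^sup>2
         \<le> 1 / (gam - lam)\<^sup>2 * (2 / (real K * eta) * (F x - moreau F gam x)
              + lam\<^sup>2 * ((1 / real N) * (\<Sum>j<N. \<delta> j)))"
proof -
  have sm: "\<And>j. j < N \<Longrightarrow> smooth Lf (f j)" using smooth_f by blast
  have Lf0: "0 \<le> Lf"
  proof (rule ccontr)
    assume neg: "\<not> 0 \<le> Lf"
    obtain b :: 'a where b: "b \<in> Basis" using nonempty_Basis by blast
    then have "b \<noteq> 0" using nonzero_Basis by blast
    then have nb: "norm (b - 0) > 0" by simp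
    have "norm (grad (f 0) b - grad (f 0) 0) \<le> Lf * norm (b - 0)"
      using sm[of 0] N_pos unfolding smooth_def by blast
    moreover have "Lf * norm (b - 0) < 0" using neg nb by (simp add: mult_neg_pos)
    ultimately show False by (smt (verit) norm_ge_zero)
  qed
  have L2: "2 * Lf < lam" using lam_Lf by linarith
  have Llam: "Lf < lam" using L2 Lf0 by linarith
  have gl: "gam > lam" using gam_lam lam_pos by linarith
  define P where "P j v = prox (f j) lam v" for j v
  define A where "A v = (1 / real N) *\<^sub>R (\<Sum>j<N. P j v)" for v
  define Gp where "Gp v = (lam + gam) *\<^sub>R v - gam *\<^sub>R x - lam *\<^sub>R A v" for v
  have pe: "\<And>y. p y = F y + gam / 2 * (norm (y - x))\<^sup>2" using p_def by simp
  have Fe: "\<And>y. F y = (1 / real N) * (\<Sum>j<N. moreau (f j) lam y)" using F_def by simp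
  have gpd: "inner (Gp v) d = lam * inner (v - A v) d + gam * inner (v - x) d" for v d
    by (simp add: Gp_def inner_diff_left inner_add_left algebra_simps)
  have nx: "(norm (y - x))\<^sup>2 = (norm (v - x))\<^sup>2 + 2 * inner (v - x) (y - v) + (norm (y - v))\<^sup>2" for y v
    using norm_add_sq[of "v - x" "y - v"] by simp
  have pu: "p y \<le> p v + inner (Gp v) (y - v) + (lam + gam) / 2 * (norm (y - v))\<^sup>2" for y v
  proof -
    have "F y \<le> F v + lam * inner (v - A v) (y - v) + lam / 2 * (norm (y - v))\<^sup>2"
      unfolding Fe A_def
      by (rule avg_upper[OF N_pos]) (use moreau_upper[OF sm Lf0 Llam] P_def in auto)
    moreover have "gam / 2 * (norm (y - x))\<^sup>2 = gam / 2 * (norm (v - x))\<^sup>2 + gam * inner (v - x) (y - v) + gam / 2 * (norm (y - v))\<^sup>2"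
      by (simp only: nx[of y v]) (simp add: field_simps)
    moreover have "(lam + gam) / 2 * (norm (y - v))\<^sup>2 = lam / 2 * (norm (y - v))\<^sup>2 + gam / 2 * (norm (y - v))\<^sup>2"
      by (simp add: add_divide_distrib distrib_right)
    ultimately show ?thesis unfolding pe gpd by linarith
  qed
  have pl: "p y \<ge> p v + inner (Gp v) (y - v) + (gam / 2 - Lf) * (norm (y - v))\<^sup>2" for y v
  proof -
    have "F v + lam * inner (v - A v) (y - v) + - Lf * (norm (y - v))\<^sup>2 \<le> F y"
      unfolding Fe A_def
      by (rule avg_lower[OF N_pos]) (use moreau_lower[OF sm Lf0 L2] P_def in auto)
    moreover have "gam / 2 * (norm (y - x))\<^sup>2 = gam / 2 * (norm (v - x))\<^sup>2 + gam * inner (v - x) (y - v) + gam / 2 * (norm (y - v))\<^sup>2"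
      by (simp only: nx[of y v]) (simp add: field_simps)
    moreover have "(gam / 2 - Lf) * (norm (y - v))\<^sup>2 = gam / 2 * (norm (y - v))\<^sup>2 - Lf * (norm (y - v))\<^sup>2"
      by (simp add: left_diff_distrib)
    ultimately show ?thesis unfolding pe gpd by linarith
  qed
  have gradp: "grad p v = Gp v" for v
  proof (rule grad_unique, rule quad_gderiv[where C = "lam + gam"])
    fix y
    have "(gam / 2 - Lf) * (norm (y - v))\<^sup>2 \<ge> 0" using L2 gam_lam lam_pos by (intro mult_nonneg_nonneg) auto
    moreover have "(lam + gam) / 2 * (norm (y - v))\<^sup>2 \<le> (lam + gam) * (norm (y - v))\<^sup>2"
      using lam_pos gl by (intro mult_right_mono) auto
    moreover have "(lam + gam) * (norm (y - v))\<^sup>2 \<ge> 0" using lam_pos gl by simp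
    ultimately show "\<bar>p y - p v - inner (Gp v) (y - v)\<bar> \<le> (lam + gam) * (norm (y - v))\<^sup>2"
      using pu[of y v] pl[where y=y and v=v] by linarith
  qed
  have Alip: "norm (A y - A v) \<le> 2 * norm (y - v)" for y v
  proof -
    have "A y - A v = (1 / real N) *\<^sub>R (\<Sum>j<N. P j y - P j v)"
      unfolding A_def by (simp add: sum_subtractf scaleR_diff_right)
    also have "norm \<dots> \<le> 2 * norm (y - v)"
      by (rule avg_norm[OF N_pos]) (use prox_lip[OF sm Lf0 L2] P_def in auto)
    finally show ?thesis .
  qed
  define T where "T y = (1 / (lam + gam)) *\<^sub>R (gam *\<^sub>R x + lam *\<^sub>R A y)" for y
  have "\<exists>!y. T y = y"
  proof (rule banach_fix_type[of "2 * lam / (lam + gam)"])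
    show "0 \<le> 2 * lam / (lam + gam)" "2 * lam / (lam + gam) < 1" using lam_pos gl by auto
    show "\<forall>a b. dist (T a) (T b) \<le> 2 * lam / (lam + gam) * dist a b"
    proof (intro allI)
      fix a b
      have "T a - T b = (lam / (lam + gam)) *\<^sub>R (A a - A b)"
        unfolding T_def by (simp add: algebra_simps)
      then have "dist (T a) (T b) = lam / (lam + gam) * norm (A a - A b)"
        using lam_pos gl by (simp add: dist_norm)
      also have "\<dots> \<le> lam / (lam + gam) * (2 * norm (a - b))"
        using Alip lam_pos gl by (intro mult_left_mono) auto
      finally show "dist (T a) (T b) \<le> 2 * lam / (lam + gam) * dist a b" by (simp add: dist_norm mult.assoc mult.left_commute)
    qed
  qed
  then obtain ys where ys: "T ys = ys" by blast
  have Gys: "Gp ys = 0"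
  proof -
    have "(lam + gam) *\<^sub>R ys = (lam + gam) *\<^sub>R T ys" using ys by simp
    also have "\<dots> = gam *\<^sub>R x + lam *\<^sub>R A ys" unfolding T_def using lam_pos gl by simp
    finally show ?thesis unfolding Gp_def by simp
  qed
  have pmin: "p y \<ge> p ys + (gam / 2 - Lf) * (norm (y - ys))\<^sup>2" for y
    using pl[where y=y and v=ys] Gys by simp
  have c0: "gam / 2 - Lf > 0" using L2 gam_lam lam_pos by simp
  have pge: "p ys \<le> p y" for y using pmin[of y] c0 by (smt (verit) mult_nonneg_nonneg zero_le_power2)
  have pe2: "(\<lambda>\<theta>. F \<theta> + gam / 2 * (norm (\<theta> - x))\<^sup>2) = p" using p_def by simp
  have proxF: "prox F gam x = ys"
    unfolding prox_def pe[symmetric]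
  proof (rule some_equality)
    show "\<forall>\<theta>'. p ys \<le> p \<theta>'" using pmin c0 by (smt (verit) mult_nonneg_nonneg zero_le_power2)
    fix t1 assume "\<forall>\<theta>'. p t1 \<le> p \<theta>'"
    then have "p t1 \<le> p ys" by blast
    with pmin[of t1] have "(gam / 2 - Lf) * (norm (t1 - ys))\<^sup>2 \<le> 0" by linarith
    then have "(norm (t1 - ys))\<^sup>2 \<le> 0" using c0 by (simp add: mult_le_0_iff)
    then show "t1 = ys" by simp
  qed
  have moreauF: "moreau F gam x \<le> p (w K)"
  proof -
    have "moreau F gam x = Inf (range p)" unfolding moreau_def pe2 ..
    also have "\<dots> \<le> p (w K)"
    proof (rule cInf_lower)
      show "bdd_below (range p)"
        by (rule bdd_belowI[of _ "p ys"]) (use pge in auto)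
    qed auto
    finally show ?thesis .
  qed
  have Glow: "(gam - lam) * norm (v - ys) \<le> norm (Gp v)" for v
  proof -
    have "Gp v = Gp v - Gp ys" using Gys by simp
    also have "\<dots> = (lam + gam) *\<^sub>R (v - ys) - lam *\<^sub>R (A v - A ys)"
      unfolding Gp_def by (simp add: algebra_simps)
    finally have e: "Gp v = (lam + gam) *\<^sub>R (v - ys) - lam *\<^sub>R (A v - A ys)" .
    have "norm ((lam + gam) *\<^sub>R (v - ys)) - norm (lam *\<^sub>R (A v - A ys)) \<le> norm (Gp v)"
      unfolding e by (rule norm_triangle_ineq2)
    moreover have "norm ((lam + gam) *\<^sub>R (v - ys)) = (lam + gam) * norm (v - ys)" using lam_pos gl by simp
    moreover have "norm (lam *\<^sub>R (A v - A ys)) \<le> lam * (2 * norm (v - ys))"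
      using Alip[of v ys] lam_pos by (simp add: mult_left_mono)
    ultimately show ?thesis by (simp add: algebra_simps)
  qed
  define E where "E k = lam *\<^sub>R (A (w k) - (1 / real N) *\<^sub>R (\<Sum>j<N. \<theta> k j))" for k
  define Dl where "Dl = (1 / real N) * (\<Sum>j<N. \<delta> j)"
  have step: "w (Suc k) - w k = - eta *\<^sub>R (Gp (w k) + E k)" if k: "k < K" for k
    using w_step k unfolding Gp_def E_def by (simp add: algebra_simps)
  have Enorm: "(norm (E k))\<^sup>2 \<le> lam\<^sup>2 * Dl" if k: "k < K" for k
  proof -
    have "A (w k) - (1 / real N) *\<^sub>R (\<Sum>j<N. \<theta> k j) = (1 / real N) *\<^sub>R (\<Sum>j<N. P j (w k) - \<theta> k j)"
      unfolding A_def by (simp add: sum_subtractf scaleR_diff_right)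
    moreover have "(norm ((1 / real N) *\<^sub>R (\<Sum>j<N. P j (w k) - \<theta> k j)))\<^sup>2 \<le> Dl"
      unfolding Dl_def by (rule avg_norm_sq[OF N_pos]) (use inexact k P_def in auto)
    ultimately have "(norm (A (w k) - (1 / real N) *\<^sub>R (\<Sum>j<N. \<theta> k j)))\<^sup>2 \<le> Dl" by simp
    then show ?thesis unfolding E_def using lam_pos
      by (simp add: power_mult_distrib mult_left_mono)
  qed
  have desc: "(norm (Gp (w k)))\<^sup>2 \<le> 2 / eta * (p (w k) - p (w (Suc k))) + lam\<^sup>2 * Dl" if k: "k < K" for k
  proof -
    define g where "g = Gp (w k)"
    define e where "e = E k"
    have s: "w (Suc k) - w k = - eta *\<^sub>R (g + e)" using step[OF k] g_def e_def by simp
    have a: "p (w (Suc k)) \<le> p (w k) + inner g (w (Suc k) - w k) + (lam + gam) / 2 * (norm (w (Suc k) - w k))\<^sup>2"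
      using pu g_def by blast
    have b: "inner g (w (Suc k) - w k) = - (eta * (norm g)\<^sup>2) - eta * inner g e"
      unfolding s by (simp add: inner_add_right power2_norm_eq_inner algebra_simps)
    have ge: "(norm (g + e))\<^sup>2 = (norm g)\<^sup>2 + 2 * inner g e + (norm e)\<^sup>2" by (rule norm_add_sq)
    have cc: "(norm (w (Suc k) - w k))\<^sup>2 = eta\<^sup>2 * (norm (g + e))\<^sup>2"
      unfolding s by (simp add: power_mult_distrib)
    have et: "(lam + gam) / 2 * eta\<^sup>2 \<le> eta / 2"
    proof -
      have "eta * (lam + gam) \<le> 1" using eta_le lam_pos gl by (simp add: field_simps)
      then have "eta * (eta * (lam + gam)) \<le> eta * 1" using eta_pos by (intro mult_left_mono) auto
      then show ?thesis by (simp add: power2_eq_square algebra_simps)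
    qed
    have d: "(lam + gam) / 2 * (norm (w (Suc k) - w k))\<^sup>2 \<le> eta / 2 * (norm (g + e))\<^sup>2"
      unfolding cc using et by (simp add: mult.assoc[symmetric] mult_right_mono)
    have d2: "eta / 2 * (norm (g + e))\<^sup>2 = (eta * (norm g)\<^sup>2) / 2 + eta * inner g e + (eta * (norm e)\<^sup>2) / 2"
      unfolding ge by (simp add: algebra_simps)
    have en: "(norm e)\<^sup>2 \<le> lam\<^sup>2 * Dl" using Enorm[OF k] e_def by simp
    have "eta * (norm g)\<^sup>2 \<le> 2 * (p (w k) - p (w (Suc k))) + eta * (norm e)\<^sup>2"
      using a b d d2 by argo
    then have "(norm g)\<^sup>2 \<le> 2 / eta * (p (w k) - p (w (Suc k))) + (norm e)\<^sup>2"
      using eta_pos by (simp add: field_simps)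
    then show ?thesis unfolding g_def[symmetric] using en by linarith
  qed
  have K0: "K > 0" using kstar_lt by simp
  have sumb: "(\<Sum>k<K. (norm (Gp (w k)))\<^sup>2) \<le> 2 / eta * (p (w 0) - p (w K)) + real K * (lam\<^sup>2 * Dl)"
  proof -
    have "(\<Sum>k<K. (norm (Gp (w k)))\<^sup>2) \<le> (\<Sum>k<K. 2 / eta * (p (w k) - p (w (Suc k))) + lam\<^sup>2 * Dl)"
      using desc by (intro sum_mono) auto
    also have "\<dots> = 2 / eta * (\<Sum>k<K. p (w k) - p (w (Suc k))) + real K * (lam\<^sup>2 * Dl)"
      by (simp add: sum.distrib sum_distrib_left)
    also have "(\<Sum>k<K. p (w k) - p (w (Suc k))) = p (w 0) - p (w K)"
      by (rule sum_lessThan_telescope')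
    finally show ?thesis .
  qed
  have kst: "real K * (norm (Gp (w kstar)))\<^sup>2 \<le> (\<Sum>k<K. (norm (Gp (w k)))\<^sup>2)"
  proof -
    have "(\<Sum>k<K. (norm (Gp (w kstar)))\<^sup>2) \<le> (\<Sum>k<K. (norm (Gp (w k)))\<^sup>2)"
      using kstar_min gradp by (intro sum_mono) auto
    then show ?thesis by simp
  qed
  have pw0: "p (w 0) = F x" using w0 pe by simp
  define R where "R = 2 / (real K * eta) * (F x - moreau F gam x) + lam\<^sup>2 * Dl"
  have "real K * (norm (Gp (w kstar)))\<^sup>2 \<le> 2 / eta * (F x - moreau F gam x) + real K * (lam\<^sup>2 * Dl)"
  proof -
    have "2 / eta * (p (w 0) - p (w K)) \<le> 2 / eta * (F x - moreau F gam x)"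
      using moreauF pw0 eta_pos by (intro mult_left_mono) auto
    then show ?thesis using kst sumb by linarith
  qed
  then have "(norm (Gp (w kstar)))\<^sup>2 \<le> (2 / eta * (F x - moreau F gam x) + real K * (lam\<^sup>2 * Dl)) / real K"
    using K0 by (simp add: pos_le_divide_eq mult.commute)
  also have "\<dots> = R"
    unfolding R_def using K0 by (simp add: add_divide_distrib)
  finally have gs: "(norm (Gp (w kstar)))\<^sup>2 \<le> R" .
  have "((gam - lam) * norm (w kstar - ys))\<^sup>2 \<le> (norm (Gp (w kstar)))\<^sup>2"
    using Glow[of "w kstar"] gl by (intro power_mono) auto
  then have "(gam - lam)\<^sup>2 * (norm (w kstar - ys))\<^sup>2 \<le> R"
    using gs by (simp add: power_mult_distrib)
  then have "(norm (w kstar - ys))\<^sup>2 \<le> R / (gam - lam)\<^sup>2"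
    using gl by (simp add: field_simps)
  then show ?thesis unfolding proxF R_def Dl_def by simp
qed

end
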